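(* There is no smooth compact hypersurface without boundary $\Gamma_*\subset\mathbb{R}^d$ (with smooth unit normal field $\mathbf{n}$) satisfying the forward self-similar profile equation $\frac{x\cdot\mathbf{n}}{4} = -\Delta_{\Gamma_*}H$ on $\Gamma_*$.
   Context: For a function $f$ and vector field $X$ on a hypersurface $\Gamma$ with unit normal $\mathbf{n}$, $\nabla_\Gamma f = (I-\mathbf{n}\otimes\mathbf{n})\nabla f$, $\operatorname{div}_\Gamma X = \operatorname{trace}\big((I-\mathbf{n}\otimes\mathbf{n})DX\big)$, $\Delta_\Gamma = \operatorname{div}_\Gamma\nabla_\Gamma$, and $H := -\operatorname{div}_\Gamma\mathbf{n}$. Such $\Gamma_*$ would be the profile of a forward self-similar solution $\Gamma_t=t^{1/4}\Gamma_*$ of the surface diffusion flow $V=-\Delta_{\Gamma_t}H$. *)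

theory Defs
  imports "HOL-Analysis.Analysis"
begin

definition partial :: "'n::finite \<Rightarrow> (real^'n \<Rightarrow> real) \<Rightarrow> real^'n \<Rightarrow> real" where
  "partial i f x = deriv (\<lambda>t. f (x + t *\<^sub>R axis i 1)) 0"

fun iter_partial :: "'n::finite list \<Rightarrow> (real^'n \<Rightarrow> real) \<Rightarrow> real^'n \<Rightarrow> real" where
  "iter_partial [] f = f"
| "iter_partial (i # is) f = partial i (iter_partial is f)"

definition smooth_on :: "(real^'n::finite) set \<Rightarrow> (real^'n \<Rightarrow> real) \<Rightarrow> bool" where
  "smooth_on U f \<longleftrightarrow> (\<forall>is. \<forall>x\<in>U. iter_partial is f differentiable (at x))"

definition smooth_field_on :: "(real^'n::finite) set \<Rightarrow> (real^'n \<Rightarrow> real^'n) \<Rightarrow> bool" where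
  "smooth_field_on U X \<longleftrightarrow> (\<forall>j. smooth_on U (\<lambda>y. X y $ j))"

definition grad :: "(real^'n::finite \<Rightarrow> real) \<Rightarrow> real^'n \<Rightarrow> real^'n" where
  "grad f x = (\<chi> i. partial i f x)"

definition jac :: "(real^'n::finite \<Rightarrow> real^'n) \<Rightarrow> real^'n \<Rightarrow> real^'n^'n" where
  "jac X x = (\<chi> i j. partial j (\<lambda>y. X y $ i) x)"

definition proj :: "(real^'n::finite \<Rightarrow> real^'n) \<Rightarrow> real^'n \<Rightarrow> real^'n^'n" where
  "proj N x = mat 1 - (\<chi> i j. N x $ i * N x $ j)"

definition surf_grad :: "(real^'n::finite \<Rightarrow> real^'n) \<Rightarrow> (real^'n \<Rightarrow> real) \<Rightarrow> real^'n \<Rightarrow> real^'n" where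
  "surf_grad N f x = proj N x *v grad f x"

definition surf_div :: "(real^'n::finite \<Rightarrow> real^'n) \<Rightarrow> (real^'n \<Rightarrow> real^'n) \<Rightarrow> real^'n \<Rightarrow> real" where
  "surf_div N X x = trace (proj N x ** jac X x)"

definition surf_lap :: "(real^'n::finite \<Rightarrow> real^'n) \<Rightarrow> (real^'n \<Rightarrow> real) \<Rightarrow> real^'n \<Rightarrow> real" where
  "surf_lap N f = surf_div N (surf_grad N f)"

definition mean_curv :: "(real^'n::finite \<Rightarrow> real^'n) \<Rightarrow> real^'n \<Rightarrow> real" where
  "mean_curv N x = - surf_div N N x"

text \<open>N is a smooth unit normal field on Gamma, given via a smooth extension to an
  open neighbourhood U of Gamma (all tangential quantities on Gamma are independent of
  the extension).\<close>
definition smooth_hypersurface_normal :: "(real^'n::finite) set \<Rightarrow> (real^'n \<Rightarrow> real^'n) \<Rightarrow> bool" where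
  "smooth_hypersurface_normal \<Gamma> N \<longleftrightarrow>
     (\<exists>U. open U \<and> \<Gamma> \<subseteq> U \<and> smooth_field_on U N) \<and>
     (\<forall>p\<in>\<Gamma>. norm (N p) = 1 \<and>
        (\<exists>V \<phi>. open V \<and> p \<in> V \<and> smooth_on V \<phi> \<and>
           (\<forall>x\<in>V. grad \<phi> x \<noteq> 0) \<and>
           \<Gamma> \<inter> V = {x\<in>V. \<phi> x = 0} \<and>
           (\<forall>x\<in>\<Gamma> \<inter> V. \<exists>c. N x = c *\<^sub>R grad \<phi> x)))"

end

theory Submission
  imports Defs
begin
lemma partial_hd:
  assumes "(f has_derivative f') (at x)"
  shows "partial i f x = f' (axis i 1)"
proof -
  have l: "linear f'" using assms has_derivative_linear by blast
  have "((\<lambda>t. f (x + t *\<^sub>R axis i 1)) has_derivative (\<lambda>t. f' (t *\<^sub>R axis i 1))) (at 0)"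
    using assms by (auto intro!: derivative_eq_intros has_derivative_compose[of "\<lambda>t. x + t *\<^sub>R axis i 1" _ _ _ f])
  then have "((\<lambda>t. f (x + t *\<^sub>R axis i 1)) has_derivative (\<lambda>t. f' (axis i 1) * t)) (at 0)"
    using l by (simp add: linear_scale mult.commute)
  then have "((\<lambda>t. f (x + t *\<^sub>R axis i 1)) has_real_derivative f' (axis i 1)) (at 0)"
    by (simp add: has_field_derivative_def)
  then show ?thesis unfolding partial_def by (rule DERIV_imp_deriv)
qed

lemma linear_expand:
  fixes f' :: "real^'n \<Rightarrow> real"
  assumes "linear f'"
  shows "f' h = (\<Sum>i\<in>UNIV. f' (axis i 1) * h $ i)"
proof -
  have "f' h = f' (\<Sum>i\<in>UNIV. h $ i *\<^sub>R axis i 1)"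
    using basis_expansion[of h] by (simp add: scalar_mult_eq_scaleR)
  also have "\<dots> = (\<Sum>i\<in>UNIV. h $ i * f' (axis i 1))"
    using assms by (simp add: linear_sum linear_scale)
  finally show ?thesis by (simp add: mult.commute)
qed

lemma grad_hd:
  assumes "(f has_derivative f') (at x)"
  shows "f' = (\<lambda>h. grad f x \<bullet> h)"
proof
  fix h
  have l: "linear f'" using assms has_derivative_linear by blast
  show "f' h = grad f x \<bullet> h"
    unfolding grad_def inner_vec_def using linear_expand[OF l, of h] partial_hd[OF assms]
    by simp
qed

lemma diff_grad:
  assumes "f differentiable (at x)"
  shows "(f has_derivative (\<lambda>h. grad f x \<bullet> h)) (at x)"
proof -
  obtain f' where "(f has_derivative f') (at x)" using assms differentiable_def by blast
  then show ?thesis using grad_hd by metis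
qed

lemma hd_vec:
  fixes F :: "real^'m \<Rightarrow> real^'n"
  assumes "\<And>i. ((\<lambda>y. F y $ i) has_derivative (\<lambda>h. F' h $ i)) (at p)"
  shows "(F has_derivative F') (at p)"
  unfolding has_derivative_componentwise_within[of F F' p UNIV]
  using assms by (auto simp: Basis_vec_def inner_axis)

definition PP :: "(real^'n) \<Rightarrow> 'n \<Rightarrow> 'n \<Rightarrow> real" where
  "PP n i j = (if i = j then 1 else 0) - n $ i * n $ j"

lemma PP_n: assumes "(\<Sum>k\<in>UNIV. n $ k * n $ k) = 1"
  shows "(\<Sum>k\<in>UNIV. PP n i k * n $ k) = 0"
proof -
  have "(\<Sum>k\<in>UNIV. PP n i k * n $ k) = (\<Sum>k\<in>UNIV. (if i = k then n $ k else 0) - n $ i * (n $ k * n $ k))"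
    by (rule sum.cong) (auto simp: PP_def algebra_simps)
  also have "\<dots> = n $ i - n $ i * (\<Sum>k\<in>UNIV. n $ k * n $ k)"
    by (simp add: sum_subtractf sum_distrib_left)
  finally show ?thesis using assms by simp
qed

lemma PP_sym: "PP n i j = PP n j i"
  unfolding PP_def by auto

lemma PP_PP: assumes "(\<Sum>k\<in>UNIV. n $ k * n $ k) = 1"
  shows "(\<Sum>k\<in>UNIV. PP n i k * PP n k j) = PP n i j"
proof -
  have "(\<Sum>k\<in>UNIV. PP n i k * PP n k j) = (\<Sum>k\<in>UNIV. PP n i k * (if k = j then 1 else 0)) - (\<Sum>k\<in>UNIV. PP n i k * n $ k) * n $ j"
    unfolding PP_def[of n _ j] by (simp add: algebra_simps sum_subtractf sum_distrib_right sum_distrib_left)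
  also have "\<dots> = PP n i j" using PP_n[OF assms] by (simp add: if_distrib cong: if_cong)
  finally show ?thesis .
qed

lemma alg_L2:
  assumes "(\<Sum>k\<in>UNIV. n $ k * n $ k) = 1"
  shows "(\<Sum>i\<in>UNIV. \<Sum>k\<in>UNIV. PP n i k * (\<Sum>j\<in>UNIV. (- (a k i * n $ j + n $ k * a j i)) * b j + PP n k j * c i j))
    = (\<Sum>i\<in>UNIV. \<Sum>j\<in>UNIV. PP n i j * c i j) + (- (\<Sum>i\<in>UNIV. \<Sum>k\<in>UNIV. PP n i k * a k i)) * (\<Sum>j\<in>UNIV. n $ j * b j)"
proof -
  have e: "PP n i k * (\<Sum>j\<in>UNIV. (- (a k i * n $ j + n $ k * a j i)) * b j + PP n k j * c i j)
     = - (PP n i k * a k i) * (\<Sum>j\<in>UNIV. n $ j * b j) - (PP n i k * n $ k) * (\<Sum>j\<in>UNIV. a j i * b j)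
       + (\<Sum>j\<in>UNIV. PP n i k * PP n k j * c i j)" for i k
    by (simp add: sum_distrib_left sum.distrib algebra_simps sum_subtractf sum_negf)
  have "(\<Sum>i\<in>UNIV. \<Sum>k\<in>UNIV. PP n i k * (\<Sum>j\<in>UNIV. (- (a k i * n $ j + n $ k * a j i)) * b j + PP n k j * c i j))
    = (\<Sum>i\<in>UNIV. - (\<Sum>k\<in>UNIV. PP n i k * a k i) * (\<Sum>j\<in>UNIV. n $ j * b j) - (\<Sum>k\<in>UNIV. PP n i k * n $ k) * (\<Sum>j\<in>UNIV. a j i * b j)
       + (\<Sum>k\<in>UNIV. \<Sum>j\<in>UNIV. PP n i k * PP n k j * c i j))"
    unfolding e by (simp add: sum.distrib sum_subtractf sum_distrib_right sum_negf)
  also have "\<dots> = (\<Sum>i\<in>UNIV. - (\<Sum>k\<in>UNIV. PP n i k * a k i) * (\<Sum>j\<in>UNIV. n $ j * b j)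
       + (\<Sum>j\<in>UNIV. PP n i j * c i j))"
  proof (rule sum.cong[OF refl])
    fix i
    have "(\<Sum>k\<in>UNIV. \<Sum>j\<in>UNIV. PP n i k * PP n k j * c i j) = (\<Sum>j\<in>UNIV. (\<Sum>k\<in>UNIV. PP n i k * PP n k j) * c i j)"
      by (subst sum.swap) (simp add: sum_distrib_right)
    then show "- (\<Sum>k\<in>UNIV. PP n i k * a k i) * (\<Sum>j\<in>UNIV. n $ j * b j) - (\<Sum>k\<in>UNIV. PP n i k * n $ k) * (\<Sum>j\<in>UNIV. a j i * b j)
       + (\<Sum>k\<in>UNIV. \<Sum>j\<in>UNIV. PP n i k * PP n k j * c i j) = - (\<Sum>k\<in>UNIV. PP n i k * a k i) * (\<Sum>j\<in>UNIV. n $ j * b j)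
       + (\<Sum>j\<in>UNIV. PP n i j * c i j)"
      using PP_n[OF assms, of i] PP_PP[OF assms, of i] by simp
  qed
  also have "\<dots> = (\<Sum>i\<in>UNIV. \<Sum>j\<in>UNIV. PP n i j * c i j) + (- (\<Sum>i\<in>UNIV. \<Sum>k\<in>UNIV. PP n i k * a k i)) * (\<Sum>j\<in>UNIV. n $ j * b j)"
    by (simp add: sum.distrib sum_distrib_right sum_negf sum_subtractf)
  finally show ?thesis .
qed

lemma grad_axis: "grad f x \<bullet> axis i 1 = partial i f x"
  by (simp add: grad_def inner_axis)

lemma proj_PP: "proj N y $ i $ k = PP (N y) i k"
  by (simp add: proj_def PP_def mat_def)

lemma surf_grad_comp: "surf_grad N f y $ k = (\<Sum>j\<in>UNIV. PP (N y) k j * partial j f y)"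
  by (simp add: surf_grad_def matrix_vector_mult_def grad_def proj_PP)

lemma mean_curv_eq: "mean_curv N p = - (\<Sum>i\<in>UNIV. \<Sum>k\<in>UNIV. PP (N p) i k * partial i (\<lambda>y. N y $ k) p)"
  by (simp add: mean_curv_def surf_div_def trace_def matrix_matrix_mult_def proj_PP jac_def)

lemma norm1_sum: "norm (v::real^'n) = 1 \<Longrightarrow> (\<Sum>k\<in>UNIV. v $ k * v $ k) = 1"
proof -
  assume "norm v = 1"
  then have "v \<bullet> v = 1" using norm_eq_1 by blast
  then show ?thesis by (simp add: inner_vec_def)
qed

lemma surf_lap_formula:
  fixes N :: "real^'n \<Rightarrow> real^'n"
  assumes Nd: "\<And>k. (\<lambda>y. N y $ k) differentiable (at p)"
    and fd: "\<And>j. partial j f differentiable (at p)"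
    and unit: "norm (N p) = 1"
  shows "surf_lap N f p = (\<Sum>i\<in>UNIV. \<Sum>j\<in>UNIV. PP (N p) i j * partial i (partial j f) p)
      + mean_curv N p * (\<Sum>j\<in>UNIV. N p $ j * partial j f p)"
proof -
  have dk: "((\<lambda>y. surf_grad N f y $ k) has_derivative (\<lambda>h. \<Sum>j\<in>UNIV. 
      (- ((grad (\<lambda>y. N y $ k) p \<bullet> h) * N p $ j + N p $ k * (grad (\<lambda>y. N y $ j) p \<bullet> h))) * partial j f p
      + PP (N p) k j * (grad (partial j f) p \<bullet> h))) (at p)" for k
    unfolding surf_grad_comp PP_def
    apply (rule has_derivative_eq_rhs)
     apply (rule has_derivative_sum)
     apply (rule has_derivative_mult)
      apply (rule has_derivative_diff)
       apply (rule has_derivative_const)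
      apply (rule has_derivative_mult)
       apply (rule diff_grad[OF Nd])
      apply (rule diff_grad[OF Nd])
     apply (rule diff_grad[OF fd])
    apply (rule ext, rule sum.cong, simp, simp add: algebra_simps)
    done
  have pk: "partial i (\<lambda>y. surf_grad N f y $ k) p = (\<Sum>j\<in>UNIV. (- (partial i (\<lambda>y. N y $ k) p * N p $ j + N p $ k * partial i (\<lambda>y. N y $ j) p)) * partial j f p
      + PP (N p) k j * partial i (partial j f) p)" for i k
    using partial_hd[OF dk[of k], of i] by (simp add: grad_axis)
  have "surf_lap N f p = (\<Sum>i\<in>UNIV. \<Sum>k\<in>UNIV. PP (N p) i k * partial i (\<lambda>y. surf_grad N f y $ k) p)"
    by (simp add: surf_lap_def surf_div_def trace_def matrix_matrix_mult_def proj_PP jac_def)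
  also have "\<dots> = (\<Sum>i\<in>UNIV. \<Sum>k\<in>UNIV. PP (N p) i k * (\<Sum>j\<in>UNIV. (- (partial i (\<lambda>y. N y $ k) p * N p $ j + N p $ k * partial i (\<lambda>y. N y $ j) p)) * partial j f p
      + PP (N p) k j * partial i (partial j f) p))"
    by (simp only: pk)
  also have "\<dots> = (\<Sum>i\<in>UNIV. \<Sum>j\<in>UNIV. PP (N p) i j * partial i (partial j f) p)
      + mean_curv N p * (\<Sum>j\<in>UNIV. N p $ j * partial j f p)"
    unfolding mean_curv_eq
    by (rule alg_L2[OF norm1_sum[OF unit], where a="\<lambda>k i. partial i (\<lambda>y. N y $ k) p" and b="\<lambda>j. partial j f p"
        and c = "\<lambda>i j. partial i (partial j f) p"])
  finally show ?thesis .
qed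

lemma sm_iter:
  assumes "smooth_on U f" "x \<in> U"
  shows "iter_partial is f differentiable (at x)"
  using assms unfolding smooth_on_def by blast

lemma sm0: "smooth_on U f \<Longrightarrow> x \<in> U \<Longrightarrow> f differentiable (at x)"
  using sm_iter[of U f x "[]"] by simp
lemma sm1: "smooth_on U f \<Longrightarrow> x \<in> U \<Longrightarrow> partial i f differentiable (at x)"
  using sm_iter[of U f x "[i]"] by simp
lemma sm2: "smooth_on U f \<Longrightarrow> x \<in> U \<Longrightarrow> partial j (partial i f) differentiable (at x)"
  using sm_iter[of U f x "[j,i]"] by simp

lemma sfo: "smooth_field_on U N \<Longrightarrow> smooth_on U (\<lambda>y. N y $ k)"
  unfolding smooth_field_on_def by blast

definition EF :: "(real^'n \<Rightarrow> real^'n) \<Rightarrow> 'n \<Rightarrow> real^'n \<Rightarrow> real" where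
  "EF N j x = - (\<Sum>i\<in>UNIV. \<Sum>k\<in>UNIV. (- (N x $ i * partial j (\<lambda>y. N y $ k) x + partial j (\<lambda>y. N y $ i) x * N x $ k))
       * partial i (\<lambda>y. N y $ k) x + PP (N x) i k * partial j (partial i (\<lambda>y. N y $ k)) x)"

lemma mean_curv_fun: "mean_curv N = (\<lambda>y. - (\<Sum>i\<in>UNIV. \<Sum>k\<in>UNIV. ((if i = k then 1 else 0) - N y $ i * N y $ k) * partial i (\<lambda>y. N y $ k) y))"
  by (rule ext) (simp add: mean_curv_eq PP_def)

lemma F_hd:
  assumes sm: "smooth_field_on U N" and x: "x \<in> U"
  shows "(mean_curv N has_derivative (\<lambda>h. - (\<Sum>i\<in>UNIV. \<Sum>k\<in>UNIV. 
      (- (N x $ i * (grad (\<lambda>y. N y $ k) x \<bullet> h) + (grad (\<lambda>y. N y $ i) x \<bullet> h) * N x $ k)) * partial i (\<lambda>y. N y $ k) x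
      + PP (N x) i k * (grad (partial i (\<lambda>y. N y $ k)) x \<bullet> h)))) (at x)"
proof -
  note d0 = sm0[OF sfo[OF sm] x] and d1 = sm1[OF sfo[OF sm] x]
  show ?thesis
    unfolding mean_curv_fun
    apply (rule has_derivative_eq_rhs)
     apply (rule has_derivative_minus)
     apply (rule has_derivative_sum)
     apply (rule has_derivative_sum)
     apply (rule has_derivative_mult)
      apply (rule has_derivative_diff)
       apply (rule has_derivative_const)
      apply (rule has_derivative_mult)
       apply (rule diff_grad[OF d0])
      apply (rule diff_grad[OF d0])
     apply (rule diff_grad[OF d1])
    apply (rule ext, simp only: PP_def)
    apply (intro arg_cong[where f=uminus] sum.cong refl)
    apply (simp add: algebra_simps)
    done
qed

lemma partial_F:
  assumes sm: "smooth_field_on U N" and x: "x \<in> U"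
  shows "partial j (mean_curv N) x = EF N j x"
  using partial_hd[OF F_hd[OF sm x], of j] by (simp add: grad_axis EF_def)

lemma EF_diff:
  assumes sm: "smooth_field_on U N" and x: "x \<in> U"
  shows "EF N j differentiable (at x)"
proof -
  note d0 = sm0[OF sfo[OF sm] x] and d1 = sm1[OF sfo[OF sm] x] and d2 = sm2[OF sfo[OF sm] x]
  have e: "EF N j = (\<lambda>x. - (\<Sum>i\<in>UNIV. \<Sum>k\<in>UNIV. (- (N x $ i * partial j (\<lambda>y. N y $ k) x + partial j (\<lambda>y. N y $ i) x * N x $ k))
       * partial i (\<lambda>y. N y $ k) x + ((if i = k then 1 else 0) - N x $ i * N x $ k) * partial j (partial i (\<lambda>y. N y $ k)) x))"
    by (rule ext) (simp add: EF_def PP_def)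
  show ?thesis unfolding e
    apply (rule differentiable_minus)
    apply (rule differentiable_sum, simp, rule ballI)+
    apply (intro differentiable_add differentiable_mult differentiable_diff differentiable_minus
        differentiable_const d0 d1 d2)
    done
qed

lemma F_smooth:
  assumes U: "open U" and sm: "smooth_field_on U N" and x: "x \<in> U"
  shows "mean_curv N differentiable (at x)" and "partial j (mean_curv N) differentiable (at x)"
proof -
  show "mean_curv N differentiable (at x)" using F_hd[OF sm x] differentiable_def by blast
  obtain D where D: "(EF N j has_derivative D) (at x)" using EF_diff[OF sm x] differentiable_def by blast
  have "(partial j (mean_curv N) has_derivative D) (at x)"
    by (rule has_derivative_transform_within_open[OF D U x]) (simp add: partial_F[OF sm])
  then show "partial j (mean_curv N) differentiable (at x)" using differentiable_def by blast
qed

lemma g_facts: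
  fixes F :: "real^'n \<Rightarrow> real"
  assumes U: "open U" and Fd: "\<And>x. x \<in> U \<Longrightarrow> F differentiable (at x)"
    and Fd1: "\<And>x j. x \<in> U \<Longrightarrow> partial j F differentiable (at x)" and p: "p \<in> U"
    and g: "g = (\<lambda>y. (1/2) * (y \<bullet> y) + 2 * (F y * F y))"
  shows "\<And>x. x \<in> U \<Longrightarrow> g differentiable (at x)"
    and "\<And>x. x \<in> U \<Longrightarrow> partial i g x = x $ i + 4 * F x * partial i F x"
    and "partial i g differentiable (at p)"
    and "partial j (partial i g) p = (if i = j then 1 else 0) + 4 * (partial j F p * partial i F p + F p * partial j (partial i F) p)"
proof -
  have gd: "(g has_derivative (\<lambda>h. (x \<bullet> h + h \<bullet> x) / 2 + 2 * (F x * (grad F x \<bullet> h) + (grad F x \<bullet> h) * F x))) (at x)"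
    if x: "x \<in> U" for x
    unfolding g
    apply (rule has_derivative_eq_rhs)
     apply (rule has_derivative_add)
      apply (rule has_derivative_mult[OF has_derivative_const has_derivative_inner[OF has_derivative_ident has_derivative_ident]])
     apply (rule has_derivative_mult[OF has_derivative_const has_derivative_mult[OF diff_grad[OF Fd[OF x]] diff_grad[OF Fd[OF x]]]])
    apply (simp add: algebra_simps add_divide_distrib fun_eq_iff)
    done
  show "\<And>x. x \<in> U \<Longrightarrow> g differentiable (at x)" using gd differentiable_def by blast
  show pg: "\<And>x. x \<in> U \<Longrightarrow> partial i g x = x $ i + 4 * F x * partial i F x" for i
    using partial_hd[OF gd] by (simp add: grad_def inner_axis inner_axis' algebra_simps)
  have Ad: "((\<lambda>x. x $ i + 4 * F x * partial i F x) has_derivative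
      (\<lambda>h. h $ i + (4 * F p * (grad (partial i F) p \<bullet> h) + 4 * (grad F p \<bullet> h) * partial i F p))) (at p)"
    apply (rule has_derivative_add)
     apply (rule bounded_linear_imp_has_derivative[OF bounded_linear_vec_nth])
    apply (rule has_derivative_eq_rhs)
    apply (rule has_derivative_mult)
      apply (rule has_derivative_mult[OF has_derivative_const])
      apply (rule diff_grad[OF Fd[OF p]])
     apply (rule diff_grad[OF Fd1[OF p]])
    apply (simp add: algebra_simps)
    done
  have Ag: "(partial i g has_derivative
      (\<lambda>h. h $ i + (4 * F p * (grad (partial i F) p \<bullet> h) + 4 * (grad F p \<bullet> h) * partial i F p))) (at p)"
    by (rule has_derivative_transform_within_open[OF Ad U p]) (simp add: pg)
  show "partial i g differentiable (at p)" using Ag differentiable_def by blast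
  show "partial j (partial i g) p = (if i = j then 1 else 0) + 4 * (partial j F p * partial i F p + F p * partial j (partial i F) p)"
    using partial_hd[OF Ag, of j] by (cases "i = j") (simp_all add: grad_axis algebra_simps, auto simp: axis_def)
qed

lemma at_right0_nbot: "at_right (0::real) \<noteq> bot"
  using trivial_limit_at_right_real[of 0] unfolding trivial_limit_def .

lemma line_deriv:
  fixes f :: "'a::real_normed_vector \<Rightarrow> real"
  assumes "(f has_derivative f') (at (a + \<tau> *\<^sub>R u))"
  shows "((\<lambda>s. f (a + s *\<^sub>R u)) has_real_derivative f' u) (at \<tau>)"
proof -
  have l: "linear f'" using assms has_derivative_linear by blast
  have "((\<lambda>s. f (a + s *\<^sub>R u)) has_derivative (\<lambda>s. f' (s *\<^sub>R u))) (at \<tau>)"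
    using assms by (auto intro!: derivative_eq_intros has_derivative_compose[of "\<lambda>s. a + s *\<^sub>R u" _ _ _ f])
  then have "((\<lambda>s. f (a + s *\<^sub>R u)) has_derivative (\<lambda>s. f' u * s)) (at \<tau>)"
    using l by (simp add: linear_scale mult.commute)
  then show ?thesis by (simp add: has_field_derivative_def)
qed

lemma taylor2:
  fixes f :: "'a::real_inner \<Rightarrow> real" and D :: "'a \<Rightarrow> 'a"
  assumes W: "open W" "p \<in> W" and fd: "\<And>x. x \<in> W \<Longrightarrow> (f has_derivative (\<lambda>h. D x \<bullet> h)) (at x)"
    and Dd: "(D has_derivative D') (at p)" and e: "e > 0"
  shows "\<exists>d>0. \<forall>y. norm y < d \<longrightarrow> \<bar>f (p + y) - f p - D p \<bullet> y - (D' y \<bullet> y) / 2\<bar> \<le> e * (norm y)^2"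
proof -
  obtain d1 where d1: "d1 > 0" "\<And>z. norm (z - p) < d1 \<Longrightarrow> norm (D z - D p - D' (z - p)) \<le> e * norm (z - p)"
    using Dd e unfolding has_derivative_at_alt by blast
  obtain d2 where d2: "d2 > 0" "ball p d2 \<subseteq> W" using W open_contains_ball by blast
  have lin: "linear D'" using Dd has_derivative_linear by blast
  show ?thesis
  proof (intro exI[of _ "min d1 d2"] conjI allI impI)
    show "min d1 d2 > 0" using d1 d2 by simp
    fix y :: 'a assume y: "norm y < min d1 d2"
    define k where "k \<tau> = f (p + \<tau> *\<^sub>R y) - \<tau> * (D p \<bullet> y) - \<tau>^2/2 * (D' y \<bullet> y)" for \<tau>
    define k' where "k' \<tau> = D (p + \<tau> *\<^sub>R y) \<bullet> y - D p \<bullet> y - \<tau> * (D' y \<bullet> y)" for \<tau>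
    have kd: "(k has_real_derivative k' \<tau>) (at \<tau>)" if "0 \<le> \<tau>" "\<tau> \<le> 1" for \<tau>
    proof -
      have "norm (\<tau> *\<^sub>R y) \<le> norm y" using that by (simp add: mult_left_le_one_le)
      then have "p + \<tau> *\<^sub>R y \<in> W" using d2 y by (auto simp: dist_norm)
      then have h1: "((\<lambda>s. f (p + s *\<^sub>R y)) has_real_derivative (D (p + \<tau> *\<^sub>R y) \<bullet> y)) (at \<tau>)"
        using line_deriv[of f "\<lambda>h. D (p + \<tau> *\<^sub>R y) \<bullet> h" p \<tau> y] fd by blast
      show ?thesis unfolding k_def k'_def
        by (auto intro!: derivative_eq_intros h1)
    qed
    obtain z where z: "0 < z" "z < 1" "k 1 - k 0 = (1 - 0) * k' z"
      using MVT2[of 0 1 k k'] kd by auto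
    have nz: "norm (z *\<^sub>R y) \<le> norm y" using z by (simp add: mult_left_le_one_le)
    have "k' z = (D (p + z *\<^sub>R y) - D p - D' (z *\<^sub>R y)) \<bullet> y"
      unfolding k'_def using lin by (simp add: linear_scale inner_diff_left)
    also have "\<bar>\<dots>\<bar> \<le> norm (D (p + z *\<^sub>R y) - D p - D' (z *\<^sub>R y)) * norm y"
      by (rule Cauchy_Schwarz_ineq2)
    also have "\<dots> \<le> (e * norm (z *\<^sub>R y)) * norm y"
      using d1(2)[of "p + z *\<^sub>R y"] nz y by (intro mult_right_mono) auto
    also have "\<dots> \<le> (e * norm y) * norm y"
      using nz e by (intro mult_right_mono mult_left_mono) auto
    finally have kz: "\<bar>k' z\<bar> \<le> e * (norm y)^2" by (simp add: power2_eq_square mult.assoc)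
    have "k 1 - k 0 = f (p + y) - f p - D p \<bullet> y - (D' y \<bullet> y) / 2"
      unfolding k_def by simp
    then show "\<bar>f (p + y) - f p - D p \<bullet> y - (D' y \<bullet> y) / 2\<bar> \<le> e * (norm y)^2"
      using z(3) kz by simp
  qed
qed

lemma bounded_eventually:
  fixes Y :: "real \<Rightarrow> 'a::real_normed_vector"
  assumes "(Y \<longlongrightarrow> v) F"
  shows "eventually (\<lambda>t. norm (Y t) < norm v + 1) F"
proof -
  have "eventually (\<lambda>t. dist (Y t) v < 1) F" using tendstoD[OF assms] by simp
  then show ?thesis
    by eventually_elim (metis add_less_cancel_left dist_norm norm_triangle_sub order_le_less_trans)
qed

lemma FO:
  fixes f :: "'a::real_normed_vector \<Rightarrow> 'b::real_normed_vector"
  assumes fd: "(f has_derivative f') (at p)"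
    and QY: "((\<lambda>t. (Q t - p) /\<^sub>R t) \<longlongrightarrow> v) (at_right 0)"
    and Qp: "(Q \<longlongrightarrow> p) (at_right 0)"
  shows "((\<lambda>t. (f (Q t) - f p) /\<^sub>R t) \<longlongrightarrow> f' v) (at_right 0)"
proof -
  have bl: "bounded_linear f'" using fd has_derivative_bounded_linear by blast
  have 1: "((\<lambda>t. f' ((Q t - p) /\<^sub>R t)) \<longlongrightarrow> f' v) (at_right 0)"
    by (rule bounded_linear.tendsto[OF bl QY])
  have 2: "((\<lambda>t. (f (Q t) - f p) /\<^sub>R t - f' ((Q t - p) /\<^sub>R t)) \<longlongrightarrow> 0) (at_right 0)"
  proof (rule tendstoI)
    fix \<epsilon> :: real assume \<epsilon>: "\<epsilon> > 0"
    define M where "M = norm v + 1"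
    have M: "M > 0" unfolding M_def by (simp add: add_nonneg_pos)
    obtain d where d: "d > 0" "\<And>y. norm (y - p) < d \<Longrightarrow> norm (f y - f p - f' (y - p)) \<le> (\<epsilon> / (2 * M)) * norm (y - p)"
      using fd \<epsilon> M unfolding has_derivative_at_alt by (metis divide_pos_pos mult_pos_pos zero_less_numeral)
    have ev1: "eventually (\<lambda>t. norm ((Q t - p) /\<^sub>R t) < M) (at_right 0)"
      using bounded_eventually[OF QY] unfolding M_def .
    have ev2: "eventually (\<lambda>t. dist (Q t) p < d) (at_right 0)" using tendstoD[OF Qp d(1)] .
    have ev3: "eventually (\<lambda>t. (0::real) < t) (at_right 0)" by (rule eventually_at_right_less)
    show "eventually (\<lambda>t. dist ((f (Q t) - f p) /\<^sub>R t - f' ((Q t - p) /\<^sub>R t)) 0 < \<epsilon>) (at_right 0)"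
      using ev1 ev2 ev3
    proof eventually_elim
      case (elim t)
      have nQ: "norm ((Q t - p) /\<^sub>R t) = norm (Q t - p) / t"
        using elim by (simp add: divide_inverse_commute)
      have "(f (Q t) - f p) /\<^sub>R t - f' ((Q t - p) /\<^sub>R t) = (f (Q t) - f p - f' (Q t - p)) /\<^sub>R t"
        using bounded_linear.linear[OF bl] by (simp add: linear_scale linear_diff scaleR_diff_right)
      then have "dist ((f (Q t) - f p) /\<^sub>R t - f' ((Q t - p) /\<^sub>R t)) 0 = norm (f (Q t) - f p - f' (Q t - p)) / t"
        using elim by (simp add: dist_norm divide_inverse_commute)
      also have "\<dots> \<le> ((\<epsilon> / (2 * M)) * norm (Q t - p)) / t"
        using d(2)[of "Q t"] elim by (intro divide_right_mono) (auto simp: dist_norm)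
      also have "\<dots> = (\<epsilon> / (2 * M)) * (norm (Q t - p) / t)"
        by simp
      also have "(\<epsilon> / (2 * M)) * (norm (Q t - p) / t) \<le> (\<epsilon> / (2 * M)) * M"
        using elim \<epsilon> M nQ by (intro mult_left_mono) auto
      also have "\<dots> < \<epsilon>" using M \<epsilon> by simp
      finally show ?case .
    qed
  qed
  have "((\<lambda>t. f' ((Q t - p) /\<^sub>R t) + ((f (Q t) - f p) /\<^sub>R t - f' ((Q t - p) /\<^sub>R t))) \<longlongrightarrow> f' v + 0) (at_right 0)"
    by (rule tendsto_add[OF 1 2])
  then show ?thesis by simp
qed

lemma SO:
  fixes \<psi> :: "'a::real_inner \<Rightarrow> real" and \<Psi> :: "'a \<Rightarrow> 'a"
  assumes W: "open W" "p \<in> W" and \<psi>d: "\<And>x. x \<in> W \<Longrightarrow> (\<psi> has_derivative (\<lambda>h. \<Psi> x \<bullet> h)) (at x)"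
    and \<Psi>d: "(\<Psi> has_derivative \<Psi>') (at p)" and \<Psi>0: "\<Psi> p = 0"
    and QY: "((\<lambda>t. (Q t - p) /\<^sub>R t) \<longlongrightarrow> v) (at_right 0)"
    and Qp: "(Q \<longlongrightarrow> p) (at_right 0)"
  shows "((\<lambda>t. (\<psi> (Q t) - \<psi> p) / t^2) \<longlongrightarrow> (\<Psi>' v \<bullet> v) / 2) (at_right 0)"
proof -
  have bl: "bounded_linear \<Psi>'" using \<Psi>d has_derivative_bounded_linear by blast
  have lin: "linear \<Psi>'" using bounded_linear.linear[OF bl] .
  have 1: "((\<lambda>t. (\<Psi>' ((Q t - p) /\<^sub>R t) \<bullet> ((Q t - p) /\<^sub>R t)) / 2) \<longlongrightarrow> (\<Psi>' v \<bullet> v) / 2) (at_right 0)"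
    by (intro tendsto_intros bounded_linear.tendsto[OF bl QY] QY) simp
  have 2: "((\<lambda>t. (\<psi> (Q t) - \<psi> p) / t^2 - (\<Psi>' ((Q t - p) /\<^sub>R t) \<bullet> ((Q t - p) /\<^sub>R t)) / 2) \<longlongrightarrow> 0) (at_right 0)"
  proof (rule tendstoI)
    fix \<epsilon> :: real assume \<epsilon>: "\<epsilon> > 0"
    define M where "M = norm v + 1"
    have M: "M > 0" unfolding M_def by (simp add: add_nonneg_pos)
    have e: "\<epsilon> / (2 * M^2) > 0" using \<epsilon> M by simp
    obtain d where d: "d > 0" "\<And>y. norm y < d \<Longrightarrow> \<bar>\<psi> (p + y) - \<psi> p - \<Psi> p \<bullet> y - (\<Psi>' y \<bullet> y) / 2\<bar> \<le> (\<epsilon> / (2 * M^2)) * (norm y)^2"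
      using taylor2[OF W \<psi>d \<Psi>d e] by blast
    have ev1: "eventually (\<lambda>t. norm ((Q t - p) /\<^sub>R t) < M) (at_right 0)"
      using bounded_eventually[OF QY] unfolding M_def .
    have ev2: "eventually (\<lambda>t. dist (Q t) p < d) (at_right 0)" using tendstoD[OF Qp d(1)] .
    have ev3: "eventually (\<lambda>t. (0::real) < t) (at_right 0)" by (rule eventually_at_right_less)
    show "eventually (\<lambda>t. dist ((\<psi> (Q t) - \<psi> p) / t^2 - (\<Psi>' ((Q t - p) /\<^sub>R t) \<bullet> ((Q t - p) /\<^sub>R t)) / 2) 0 < \<epsilon>) (at_right 0)"
      using ev1 ev2 ev3
    proof eventually_elim
      case (elim t)
      define y where "y = Q t - p"
      have Qt: "Q t = p + y" unfolding y_def by simp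
      have ny: "norm y < d" using elim by (simp add: y_def dist_norm)
      have nQ: "norm (y /\<^sub>R t) = norm y / t"
        using elim by (simp add: divide_inverse_commute)
      have sq: "\<Psi>' (y /\<^sub>R t) \<bullet> (y /\<^sub>R t) = (\<Psi>' y \<bullet> y) / t^2"
        using lin elim by (simp add: linear_scale power2_eq_square divide_inverse)
      have "dist ((\<psi> (Q t) - \<psi> p) / t^2 - (\<Psi>' ((Q t - p) /\<^sub>R t) \<bullet> ((Q t - p) /\<^sub>R t)) / 2) 0
          = \<bar>\<psi> (p + y) - \<psi> p - \<Psi> p \<bullet> y - (\<Psi>' y \<bullet> y) / 2\<bar> / t^2"
      proof -
        have eq: "(\<psi> (Q t) - \<psi> p) / t^2 - ((\<Psi>' y \<bullet> y) / t^2) / 2 = (\<psi> (Q t) - \<psi> p - (\<Psi>' y \<bullet> y) / 2) / t^2"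
          using elim by (simp add: field_simps)
        show ?thesis
          unfolding Qt[symmetric] y_def[symmetric] sq eq using elim \<Psi>0
          by (simp add: dist_norm abs_divide)
      qed
      also have "\<dots> \<le> ((\<epsilon> / (2 * M^2)) * (norm y)^2) / t^2"
        using d(2)[OF ny] elim by (intro divide_right_mono) auto
      also have "\<dots> = (\<epsilon> / (2 * M^2)) * (norm y / t)^2"
        by (simp add: power_divide)
      also have "\<dots> \<le> (\<epsilon> / (2 * M^2)) * M^2"
        using elim e nQ unfolding y_def
        by (intro mult_left_mono power_mono) auto
      also have "\<dots> < \<epsilon>" using M \<epsilon> by simp
      finally show ?case .
    qed
  qed
  have "((\<lambda>t. (\<Psi>' ((Q t - p) /\<^sub>R t) \<bullet> ((Q t - p) /\<^sub>R t)) / 2 + ((\<psi> (Q t) - \<psi> p) / t^2 - (\<Psi>' ((Q t - p) /\<^sub>R t) \<bullet> ((Q t - p) /\<^sub>R t)) / 2)) \<longlongrightarrow> (\<Psi>' v \<bullet> v) / 2 + 0) (at_right 0)"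
    by (rule tendsto_add[OF 1 2])
  then show ?thesis by simp
qed

lemma curve_pts:
  fixes \<phi> :: "'a::real_inner \<Rightarrow> real" and \<Phi> :: "'a \<Rightarrow> 'a"
  assumes W: "open W" "p \<in> W" and \<phi>d: "\<And>x. x \<in> W \<Longrightarrow> (\<phi> has_derivative (\<lambda>h. \<Phi> x \<bullet> h)) (at x)"
    and \<Phi>d: "(\<Phi> has_derivative \<Phi>') (at p)" and \<Phi>c: "continuous_on W \<Phi>"
    and \<phi>p: "\<phi> p = 0" and w: "\<Phi> p \<noteq> 0" and v: "v \<bullet> \<Phi> p = 0"
  shows "\<exists>\<delta>>0. \<exists>C. \<forall>t. 0 < t \<and> t < \<delta> \<longrightarrow> (\<exists>q\<in>W. \<phi> q = 0 \<and> norm (q - p - t *\<^sub>R v) \<le> C * t^2)"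
proof -
  define w where "w = \<Phi> p"
  define nw where "nw = norm w"
  have nw: "nw > 0" using w unfolding nw_def w_def by simp
  obtain r1 where r1: "r1 > 0" "ball p r1 \<subseteq> W" using W open_contains_ball by blast
  have ic: "isCont \<Phi> p" using \<Phi>c W continuous_on_eq_continuous_at by blast
  have "eventually (\<lambda>x. dist (\<Phi> x) w < nw / 2) (at p)"
    using tendstoD[OF ic[unfolded isCont_def], of "nw / 2"] nw unfolding w_def by simp
  then obtain r2 where r2: "r2 > 0" "\<And>x. x \<noteq> p \<Longrightarrow> dist x p < r2 \<Longrightarrow> dist (\<Phi> x) w < nw / 2"
    unfolding eventually_at by auto
  have r2': "dist (\<Phi> x) w < nw / 2" if "dist x p < r2" for x
    using r2(2)[of x] that nw by (cases "x = p") (auto simp: w_def)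
  obtain r3 where r3: "r3 > 0" "\<And>z. norm (z - p) < r3 \<Longrightarrow> norm (\<Phi> z - \<Phi> p - \<Phi>' (z - p)) \<le> 1 * norm (z - p)"
    using \<Phi>d unfolding has_derivative_at_alt by (meson zero_less_one)
  obtain B where B: "B > 0" "\<And>h. norm (\<Phi>' h) \<le> norm h * B"
    using bounded_linear.pos_bounded[OF has_derivative_bounded_linear[OF \<Phi>d]] by blast
  define K where "K = B + 1"
  have K: "K > 0" using B unfolding K_def by simp
  have Kb: "norm (\<Phi> z - w) \<le> K * norm (z - p)" if "norm (z - p) < r3" for z
  proof -
    have "norm (\<Phi> z - w) \<le> norm (\<Phi> z - \<Phi> p - \<Phi>' (z - p)) + norm (\<Phi>' (z - p))"
      unfolding w_def by (metis add_diff_cancel_left' diff_diff_eq2 norm_triangle_ineq4 diff_add_cancel norm_triangle_ineq)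
    also have "\<dots> \<le> norm (z - p) + norm (z - p) * B" using r3(2)[OF that] B(2)[of "z - p"] by simp
    finally show ?thesis unfolding K_def by (simp add: algebra_simps)
  qed
  define r where "r = min r1 (min r2 r3)"
  have r: "r > 0" using r1 r2 r3 unfolding r_def by simp
  define nv where "nv = norm v"
  define C0 where "C0 = 2 * K * nv^2 / nw^2"
  have C0: "C0 \<ge> 0" unfolding C0_def using K nw by simp
  define \<delta> where "\<delta> = min 1 (r / (nv + C0 * nw + 1))"
  have den: "nv + C0 * nw + 1 > 0" using C0 nw unfolding nv_def by (simp add: add_nonneg_pos)
  have \<delta>: "\<delta> > 0" unfolding \<delta>_def using r den by simp
  show ?thesis
  proof (rule exI[of _ \<delta>], rule conjI[OF \<delta>], rule exI[of _ "C0 * nw"], intro allI impI)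
    fix t :: real assume t: "0 < t \<and> t < \<delta>"
    then have t1: "t < 1" and t0: "0 < t" unfolding \<delta>_def by auto
    have "t * (nv + C0 * nw + 1) < r" using t den unfolding \<delta>_def by (simp add: pos_less_divide_eq)
    then have tr: "t * nv + t * (C0 * nw) < r" using t0 by (simp add: algebra_simps)
    define S where "S = C0 * t^2"
    have S0: "S \<ge> 0" unfolding S_def using C0 by simp
    have Snw: "S * nw \<le> t * (C0 * nw)"
    proof -
      have "t^2 \<le> t" using t0 t1 by (simp add: power2_eq_square mult_left_le_one_le)
      then have "t^2 * (C0 * nw) \<le> t * (C0 * nw)" using C0 nw by (intro mult_right_mono) auto
      then show ?thesis unfolding S_def by (simp add: algebra_simps)
    qed
    define a where "a = p + t *\<^sub>R v"
    have inr: "norm (x - p) < r \<Longrightarrow> x \<in> W \<and> dist x p < r2 \<and> norm (x - p) < r3" for x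
      using r1 unfolding r_def by (auto simp: dist_norm norm_minus_commute)
    have pa: "\<bar>\<phi> a\<bar> \<le> K * t^2 * nv^2"
    proof -
      have nl: "norm (p + \<tau> *\<^sub>R (t *\<^sub>R v) - p) \<le> t * nv" if "0 \<le> \<tau>" "\<tau> \<le> 1" for \<tau>
        using that t0 unfolding nv_def by (simp add: mult_left_le_one_le mult.assoc[symmetric])
      have nl2: "norm (p + \<tau> *\<^sub>R (t *\<^sub>R v) - p) < r" if "0 \<le> \<tau>" "\<tau> \<le> 1" for \<tau>
        using nl[OF that] tr C0 nw t0 by (smt (verit) mult_nonneg_nonneg)
      have dd: "((\<lambda>\<tau>. \<phi> (p + \<tau> *\<^sub>R (t *\<^sub>R v))) has_real_derivative (\<Phi> (p + \<tau> *\<^sub>R (t *\<^sub>R v)) \<bullet> (t *\<^sub>R v))) (at \<tau>)"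
        if "0 \<le> \<tau>" "\<tau> \<le> 1" for \<tau>
        using line_deriv[OF \<phi>d[of "p + \<tau> *\<^sub>R (t *\<^sub>R v)"]] inr[OF nl2[OF that]] by blast
      obtain z where z: "0 < z" "z < 1"
        "\<phi> (p + 1 *\<^sub>R (t *\<^sub>R v)) - \<phi> (p + 0 *\<^sub>R (t *\<^sub>R v)) = (1 - 0) * (\<Phi> (p + z *\<^sub>R (t *\<^sub>R v)) \<bullet> (t *\<^sub>R v))"
        using MVT2[of 0 1 "\<lambda>\<tau>. \<phi> (p + \<tau> *\<^sub>R (t *\<^sub>R v))" "\<lambda>\<tau>. \<Phi> (p + \<tau> *\<^sub>R (t *\<^sub>R v)) \<bullet> (t *\<^sub>R v)"] dd
        by auto
      define x where "x = p + z *\<^sub>R (t *\<^sub>R v)"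
      have xr: "norm (x - p) < r" using nl2[of z] z unfolding x_def by simp
      have "\<phi> a = (\<Phi> x - w) \<bullet> (t *\<^sub>R v)"
        using z(3) \<phi>p v unfolding a_def x_def w_def by (simp add: inner_diff_left inner_diff_right inner_commute)
      also have "\<bar>\<dots>\<bar> \<le> norm (\<Phi> x - w) * norm (t *\<^sub>R v)" by (rule Cauchy_Schwarz_ineq2)
      also have "\<dots> \<le> (K * norm (x - p)) * (t * nv)"
        using Kb[of x] inr[OF xr] t0 K unfolding nv_def by (intro mult_mono) auto
      also have "\<dots> \<le> (K * (t * nv)) * (t * nv)"
        using nl[of z] z K t0 unfolding x_def nv_def by (intro mult_mono mult_left_mono) auto
      finally show ?thesis by (simp add: power2_eq_square algebra_simps)
    qed
    have ns: "norm (a + s *\<^sub>R w - p) < r" if "\<bar>s\<bar> \<le> S" for s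
    proof -
      have "norm (a + s *\<^sub>R w - p) \<le> norm (t *\<^sub>R v) + norm (s *\<^sub>R w)"
        unfolding a_def using norm_triangle_ineq[of "t *\<^sub>R v" "s *\<^sub>R w"] by simp
      also have "\<dots> \<le> t * nv + S * nw" using that t0 nw unfolding nv_def nw_def
        by (simp add: mult_right_mono)
      finally show ?thesis using Snw tr by simp
    qed
    have kd: "((\<lambda>s. \<phi> (a + s *\<^sub>R w)) has_real_derivative (\<Phi> (a + s *\<^sub>R w) \<bullet> w)) (at s)" if "\<bar>s\<bar> \<le> S" for s
      using line_deriv[OF \<phi>d[of "a + s *\<^sub>R w"]] inr[OF ns[OF that]] by blast
    have kpos: "\<Phi> (a + s *\<^sub>R w) \<bullet> w - nw^2 / 2 \<ge> 0" if "\<bar>s\<bar> \<le> S" for s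
    proof -
      have "dist (\<Phi> (a + s *\<^sub>R w)) w < nw / 2" using r2' inr[OF ns[OF that]] by blast
      then have "norm (\<Phi> (a + s *\<^sub>R w) - w) \<le> nw / 2" by (simp add: dist_norm)
      then have "\<bar>(\<Phi> (a + s *\<^sub>R w) - w) \<bullet> w\<bar> \<le> nw / 2 * nw"
        using Cauchy_Schwarz_ineq2[of "\<Phi> (a + s *\<^sub>R w) - w" w] nw unfolding nw_def
        by (smt (verit) mult_right_mono norm_ge_zero)
      moreover have "w \<bullet> w = nw^2" unfolding nw_def by (simp add: power2_norm_eq_inner)
      ultimately show ?thesis by (simp add: inner_diff_left power2_eq_square) (smt (verit))
    qed
    have mono: "\<phi> (a + s1 *\<^sub>R w) - s1 * nw^2 / 2 \<le> \<phi> (a + s2 *\<^sub>R w) - s2 * nw^2 / 2"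
      if "-S \<le> s1" "s1 \<le> s2" "s2 \<le> S" for s1 s2
    proof (rule DERIV_nonneg_imp_nondecreasing[OF that(2)])
      fix x assume "s1 \<le> x" "x \<le> s2"
      then have x: "\<bar>x\<bar> \<le> S" using that by auto
      show "\<exists>y. ((\<lambda>s. \<phi> (a + s *\<^sub>R w) - s * nw^2 / 2) has_real_derivative y) (at x) \<and> 0 \<le> y"
        by (intro exI[of _ "\<Phi> (a + x *\<^sub>R w) \<bullet> w - nw^2 / 2"] conjI kpos[OF x])
           (auto intro!: derivative_eq_intros kd[OF x])
    qed
    have Sb: "S * nw^2 / 2 = K * t^2 * nv^2"
      unfolding S_def C0_def using nw by (simp add: field_simps)
    have up: "\<phi> (a + S *\<^sub>R w) \<ge> 0"
      using mono[of 0 S] S0 pa Sb by simp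
    have lo: "\<phi> (a + (-S) *\<^sub>R w) \<le> 0"
      using mono[of "-S" 0] S0 pa Sb by simp
    have cont: "continuous_on {-S..S} (\<lambda>s. \<phi> (a + s *\<^sub>R w))"
    proof (rule continuous_at_imp_continuous_on, rule ballI)
      fix x assume "x \<in> {-S..S}"
      then have "\<bar>x\<bar> \<le> S" by auto
      then show "isCont (\<lambda>s. \<phi> (a + s *\<^sub>R w)) x" by (rule DERIV_isCont[OF kd])
    qed
    obtain s where s: "-S \<le> s" "s \<le> S" "\<phi> (a + s *\<^sub>R w) = 0"
      using IVT'[of "\<lambda>s. \<phi> (a + s *\<^sub>R w)" "-S" 0 S, OF lo up _ cont] S0 by auto
    have sS: "\<bar>s\<bar> \<le> S" using s by auto
    show "\<exists>q\<in>W. \<phi> q = 0 \<and> norm (q - p - t *\<^sub>R v) \<le> C0 * nw * t^2"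
    proof (intro bexI[of _ "a + s *\<^sub>R w"] conjI)
      show "a + s *\<^sub>R w \<in> W" using inr[OF ns[OF sS]] by blast
      show "\<phi> (a + s *\<^sub>R w) = 0" by (rule s(3))
      have "norm (a + s *\<^sub>R w - p - t *\<^sub>R v) = \<bar>s\<bar> * nw" unfolding a_def nw_def by simp
      also have "\<dots> \<le> S * nw" using sS nw by (simp add: mult_right_mono)
      finally show "norm (a + s *\<^sub>R w - p - t *\<^sub>R v) \<le> C0 * nw * t^2" unfolding S_def by (simp add: algebra_simps)
    qed
  qed
qed

lemma curve_Q:
  fixes \<phi> :: "'a::real_inner \<Rightarrow> real" and \<Phi> :: "'a \<Rightarrow> 'a"
  assumes W: "open W" "p \<in> W" and \<phi>d: "\<And>x. x \<in> W \<Longrightarrow> (\<phi> has_derivative (\<lambda>h. \<Phi> x \<bullet> h)) (at x)"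
    and \<Phi>d: "(\<Phi> has_derivative \<Phi>') (at p)" and \<Phi>c: "continuous_on W \<Phi>"
    and \<phi>p: "\<phi> p = 0" and w: "\<Phi> p \<noteq> 0" and v: "v \<bullet> \<Phi> p = 0"
  shows "\<exists>Q. eventually (\<lambda>t. Q t \<in> W \<and> \<phi> (Q t) = 0) (at_right 0) \<and>
     ((\<lambda>t. (Q t - p) /\<^sub>R t) \<longlongrightarrow> v) (at_right 0) \<and> (Q \<longlongrightarrow> p) (at_right 0)"
proof -
  obtain \<delta> C where \<delta>: "\<delta> > 0" and H: "\<And>t. 0 < t \<and> t < \<delta> \<Longrightarrow> (\<exists>q\<in>W. \<phi> q = 0 \<and> norm (q - p - t *\<^sub>R v) \<le> C * t^2)"
    using curve_pts[OF W \<phi>d \<Phi>d \<Phi>c \<phi>p w v] by blast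
  define Q where "Q t = (SOME q. q \<in> W \<and> \<phi> q = 0 \<and> norm (q - p - t *\<^sub>R v) \<le> C * t^2)" for t
  have ev0: "eventually (\<lambda>t. 0 < t \<and> t < \<delta>) (at_right (0::real))"
    using eventually_at_right_less[of "0::real"] order_tendstoD(2)[OF tendsto_ident_at[of "0::real" "{0<..}"] \<delta>]
    by (auto elim: eventually_elim2)
  have evQ: "eventually (\<lambda>t. 0 < t \<and> Q t \<in> W \<and> \<phi> (Q t) = 0 \<and> norm (Q t - p - t *\<^sub>R v) \<le> C * t^2) (at_right 0)"
    using ev0
  proof eventually_elim
    case (elim t)
    have "\<exists>q. q \<in> W \<and> \<phi> q = 0 \<and> norm (q - p - t *\<^sub>R v) \<le> C * t^2" using H[OF elim] by blast
    from someI_ex[OF this] show ?case using elim unfolding Q_def by blast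
  qed
  have C0: "((\<lambda>t. C * t) \<longlongrightarrow> 0) (at_right (0::real))"
    using tendsto_mult[OF tendsto_const[of C] tendsto_ident_at[of "0::real" "{0<..}"]] by simp
  have Y: "((\<lambda>t. (Q t - p) /\<^sub>R t - v) \<longlongrightarrow> 0) (at_right 0)"
  proof (rule Lim_null_comparison[OF _ C0])
    show "eventually (\<lambda>t. norm ((Q t - p) /\<^sub>R t - v) \<le> C * t) (at_right 0)"
      using evQ
    proof eventually_elim
      case (elim t)
      have "(Q t - p) /\<^sub>R t - v = (Q t - p - t *\<^sub>R v) /\<^sub>R t" using elim by (simp add: algebra_simps)
      then have "norm ((Q t - p) /\<^sub>R t - v) = norm (Q t - p - t *\<^sub>R v) / t" using elim by (simp add: divide_inverse_commute)
      also have "\<dots> \<le> C * t^2 / t" using elim by (intro divide_right_mono) auto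
      also have "\<dots> = C * t" using elim by (simp add: power2_eq_square)
      finally show ?case .
    qed
  qed
  have C1: "((\<lambda>t. C * t^2 + t * norm v) \<longlongrightarrow> 0) (at_right (0::real))"
    using tendsto_add[OF tendsto_mult[OF tendsto_const[of C] tendsto_power[OF tendsto_ident_at[of "0::real" "{0<..}"], of 2]]
        tendsto_mult[OF tendsto_ident_at[of "0::real" "{0<..}"] tendsto_const[of "norm v"]]] by simp
  have Qp0: "((\<lambda>t. Q t - p) \<longlongrightarrow> 0) (at_right 0)"
  proof (rule Lim_null_comparison[OF _ C1])
    show "eventually (\<lambda>t. norm (Q t - p) \<le> C * t^2 + t * norm v) (at_right 0)"
      using evQ
    proof eventually_elim
      case (elim t)
      have "norm (Q t - p) \<le> norm (Q t - p - t *\<^sub>R v) + norm (t *\<^sub>R v)"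
        using norm_triangle_ineq[of "Q t - p - t *\<^sub>R v" "t *\<^sub>R v"] by simp
      then show ?case using elim by simp
    qed
  qed
  show ?thesis
    using evQ Y Qp0 by (intro exI[of _ Q] conjI) (auto elim: eventually_mono intro: LIM_zero_cancel)
qed

lemma max_second_order:
  fixes g \<phi> :: "'a::real_inner \<Rightarrow> real" and N G \<Phi> :: "'a \<Rightarrow> 'a"
  assumes W: "open W" "p \<in> W"
    and gd: "\<And>x. x \<in> W \<Longrightarrow> (g has_derivative (\<lambda>h. G x \<bullet> h)) (at x)"
    and Gd: "(G has_derivative G') (at p)"
    and \<phi>d: "\<And>x. x \<in> W \<Longrightarrow> (\<phi> has_derivative (\<lambda>h. \<Phi> x \<bullet> h)) (at x)"
    and \<Phi>d: "(\<Phi> has_derivative \<Phi>') (at p)" and \<Phi>c: "continuous_on W \<Phi>"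
    and Nd: "(N has_derivative N') (at p)"
    and \<phi>p: "\<phi> p = 0" and \<Phi>p: "\<Phi> p \<noteq> 0"
    and mx: "\<And>q. q \<in> W \<Longrightarrow> \<phi> q = 0 \<Longrightarrow> g q \<le> g p"
    and nrm: "\<And>q. q \<in> W \<Longrightarrow> \<phi> q = 0 \<Longrightarrow> \<exists>c. N q = c *\<^sub>R \<Phi> q"
    and unit: "norm (N p) = 1"
  shows "G p = (N p \<bullet> G p) *\<^sub>R N p"
    and "\<And>v. v \<bullet> N p = 0 \<Longrightarrow> v \<bullet> G' v - (N p \<bullet> G p) * (v \<bullet> N' v) \<le> 0"
proof -
  obtain c0 where c0: "N p = c0 *\<^sub>R \<Phi> p" using nrm[OF W(2) \<phi>p] by blast
  have c0nz: "c0 \<noteq> 0" using c0 unit by auto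
  have tang: "v \<bullet> \<Phi> p = 0" if "v \<bullet> N p = 0" for v
    using that c0nz unfolding c0 by simp
  have NN: "N p \<bullet> N p = 1" using unit norm_eq_1 by blast
  have gle: "G p \<bullet> v \<le> 0" if v: "v \<bullet> N p = 0" for v
  proof -
    obtain Q where Q: "eventually (\<lambda>t. Q t \<in> W \<and> \<phi> (Q t) = 0) (at_right 0)"
      "((\<lambda>t. (Q t - p) /\<^sub>R t) \<longlongrightarrow> v) (at_right 0)" "(Q \<longlongrightarrow> p) (at_right 0)"
      using curve_Q[OF W \<phi>d \<Phi>d \<Phi>c \<phi>p \<Phi>p tang[OF v]] by blast
    have lim: "((\<lambda>t. (g (Q t) - g p) /\<^sub>R t) \<longlongrightarrow> G p \<bullet> v) (at_right 0)"
      using FO[OF gd[OF W(2)] Q(2) Q(3)] .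
    have "eventually (\<lambda>t. (g (Q t) - g p) /\<^sub>R t \<le> 0) (at_right 0)"
      using Q(1) eventually_at_right_less[of "0::real"]
    proof eventually_elim
      case (elim t)
      then have "g (Q t) - g p \<le> 0" using mx by auto
      then show ?case using elim by (simp add: mult_nonneg_nonpos)
    qed
    then show ?thesis using tendsto_upperbound[OF lim _ at_right0_nbot] by blast
  qed
  have G0: "G p \<bullet> v = 0" if v: "v \<bullet> N p = 0" for v
    using gle[OF v] gle[of "-v"] v by (simp add: inner_minus_left)
  define \<mu> where "\<mu> = N p \<bullet> G p"
  show first: "G p = (N p \<bullet> G p) *\<^sub>R N p"
  proof -
    define u where "u = G p - \<mu> *\<^sub>R N p"
    have uN: "u \<bullet> N p = 0" unfolding u_def \<mu>_def using NN by (simp add: inner_diff_left inner_commute[of "G p" "N p"])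
    have "u \<bullet> u = G p \<bullet> u - \<mu> * (N p \<bullet> u)" unfolding u_def by (simp add: inner_diff_left)
    also have "\<dots> = 0" using G0[OF uN] uN by (simp add: inner_commute)
    finally have "u = 0" by simp
    then show ?thesis unfolding u_def \<mu>_def by simp
  qed
  fix v assume v: "v \<bullet> N p = 0"
  have vP: "v \<bullet> \<Phi> p = 0" using tang[OF v] .
  obtain Q where Q: "eventually (\<lambda>t. Q t \<in> W \<and> \<phi> (Q t) = 0) (at_right 0)"
    "((\<lambda>t. (Q t - p) /\<^sub>R t) \<longlongrightarrow> v) (at_right 0)" "(Q \<longlongrightarrow> p) (at_right 0)"
    using curve_Q[OF W \<phi>d \<Phi>d \<Phi>c \<phi>p \<Phi>p vP] by blast
  define m where "m = \<mu> * c0"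
  define \<psi> where "\<psi> x = g x - m * \<phi> x" for x
  define \<Psi> where "\<Psi> x = G x - m *\<^sub>R \<Phi> x" for x
  have \<psi>d: "(\<psi> has_derivative (\<lambda>h. \<Psi> x \<bullet> h)) (at x)" if x: "x \<in> W" for x
  proof -
    have "((\<lambda>x. g x - m * \<phi> x) has_derivative (\<lambda>h. G x \<bullet> h - m * (\<Phi> x \<bullet> h))) (at x)"
      by (intro has_derivative_diff has_derivative_mult_right gd[OF x] \<phi>d[OF x])
    then show ?thesis unfolding \<psi>_def[abs_def] \<Psi>_def by (simp add: inner_diff_left)
  qed
  have \<Psi>d: "(\<Psi> has_derivative (\<lambda>h. G' h - m *\<^sub>R \<Phi>' h)) (at p)"
    unfolding \<Psi>_def[abs_def] by (intro has_derivative_diff has_derivative_scaleR_right Gd \<Phi>d)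
  have \<Psi>0: "\<Psi> p = 0" unfolding \<Psi>_def m_def using first c0 unfolding \<mu>_def by simp
  have lim2: "((\<lambda>t. (\<psi> (Q t) - \<psi> p) / t^2) \<longlongrightarrow> ((G' v - m *\<^sub>R \<Phi>' v) \<bullet> v) / 2) (at_right 0)"
    using SO[OF W \<psi>d \<Psi>d \<Psi>0 Q(2) Q(3)] by simp
  have "eventually (\<lambda>t. (\<psi> (Q t) - \<psi> p) / t^2 \<le> 0) (at_right 0)"
    using Q(1)
  proof eventually_elim
    case (elim t)
    then have "\<psi> (Q t) - \<psi> p \<le> 0" using mx \<phi>p unfolding \<psi>_def by auto
    then show ?case by (simp add: divide_nonpos_nonneg)
  qed
  then have so: "((G' v - m *\<^sub>R \<Phi>' v) \<bullet> v) / 2 \<le> 0" using tendsto_upperbound[OF lim2 _ at_right0_nbot] by blast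
  have l1: "((\<lambda>t. v \<bullet> ((N (Q t) - N p) /\<^sub>R t)) \<longlongrightarrow> v \<bullet> N' v) (at_right 0)"
    by (intro tendsto_inner tendsto_const FO[OF Nd Q(2) Q(3)])
  have l2: "((\<lambda>t. v \<bullet> ((\<Phi> (Q t) - \<Phi> p) /\<^sub>R t)) \<longlongrightarrow> v \<bullet> \<Phi>' v) (at_right 0)"
    by (intro tendsto_inner tendsto_const FO[OF \<Phi>d Q(2) Q(3)])
  have NQ: "((\<lambda>t. N (Q t)) \<longlongrightarrow> N p) (at_right 0)"
    using isCont_tendsto_compose[OF has_derivative_continuous[OF Nd] Q(3)] .
  have PQ: "((\<lambda>t. \<Phi> (Q t)) \<longlongrightarrow> \<Phi> p) (at_right 0)"
    using isCont_tendsto_compose[OF has_derivative_continuous[OF \<Phi>d] Q(3)] .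
  have PP0: "\<Phi> p \<bullet> \<Phi> p \<noteq> 0" using \<Phi>p by simp
  have cq: "((\<lambda>t. (N (Q t) \<bullet> \<Phi> (Q t)) / (\<Phi> (Q t) \<bullet> \<Phi> (Q t))) \<longlongrightarrow> (N p \<bullet> \<Phi> p) / (\<Phi> p \<bullet> \<Phi> p)) (at_right 0)"
    by (intro tendsto_divide tendsto_inner NQ PQ PP0)
  have c0eq: "(N p \<bullet> \<Phi> p) / (\<Phi> p \<bullet> \<Phi> p) = c0" using PP0 unfolding c0 by simp
  have l3: "((\<lambda>t. (N (Q t) \<bullet> \<Phi> (Q t)) / (\<Phi> (Q t) \<bullet> \<Phi> (Q t)) * (v \<bullet> ((\<Phi> (Q t) - \<Phi> p) /\<^sub>R t))) \<longlongrightarrow> c0 * (v \<bullet> \<Phi>' v)) (at_right 0)"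
    using tendsto_mult[OF cq l2] unfolding c0eq .
  have evne: "eventually (\<lambda>t. \<Phi> (Q t) \<noteq> 0) (at_right 0)"
    using tendsto_imp_eventually_ne[OF PQ \<Phi>p] .
  have "eventually (\<lambda>t. (N (Q t) \<bullet> \<Phi> (Q t)) / (\<Phi> (Q t) \<bullet> \<Phi> (Q t)) * (v \<bullet> ((\<Phi> (Q t) - \<Phi> p) /\<^sub>R t))
       = v \<bullet> ((N (Q t) - N p) /\<^sub>R t)) (at_right 0)"
    using Q(1) evne
  proof eventually_elim
    case (elim t)
    then obtain c where c: "N (Q t) = c *\<^sub>R \<Phi> (Q t)" using nrm by blast
    have "(N (Q t) \<bullet> \<Phi> (Q t)) / (\<Phi> (Q t) \<bullet> \<Phi> (Q t)) = c" using elim unfolding c by simp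
    then show ?case using v vP unfolding c by (simp add: inner_diff_right)
  qed
  then have l4: "((\<lambda>t. v \<bullet> ((N (Q t) - N p) /\<^sub>R t)) \<longlongrightarrow> c0 * (v \<bullet> \<Phi>' v)) (at_right 0)"
    by (rule Lim_transform_eventually[OF l3])
  have nrel: "v \<bullet> N' v = c0 * (v \<bullet> \<Phi>' v)" using tendsto_unique[OF at_right0_nbot l1 l4] .
  show "v \<bullet> G' v - (N p \<bullet> G p) * (v \<bullet> N' v) \<le> 0"
    using so nrel unfolding m_def \<mu>_def by (simp add: inner_diff_left inner_commute algebra_simps)
qed

lemma quad_sum:
  assumes "(\<Sum>k\<in>UNIV. n $ k * n $ k) = 1"
  shows "(\<Sum>a\<in>UNIV. \<Sum>i\<in>UNIV. PP n i a * (\<Sum>j\<in>UNIV. X i j * PP n j a)) = (\<Sum>i\<in>UNIV. \<Sum>j\<in>UNIV. PP n i j * X i j)"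
proof -
  have PP': "(\<Sum>a\<in>UNIV. PP n i a * PP n j a) = PP n i j" for i j
    using PP_PP[OF assms, of i j] by (simp add: PP_sym[of n j])
  have "(\<Sum>a\<in>UNIV. \<Sum>i\<in>UNIV. PP n i a * (\<Sum>j\<in>UNIV. X i j * PP n j a))
      = (\<Sum>a\<in>UNIV. \<Sum>i\<in>UNIV. \<Sum>j\<in>UNIV. X i j * (PP n i a * PP n j a))"
    by (simp add: sum_distrib_left algebra_simps)
  also have "\<dots> = (\<Sum>i\<in>UNIV. \<Sum>j\<in>UNIV. \<Sum>a\<in>UNIV. X i j * (PP n i a * PP n j a))"
    by (subst sum.swap, rule sum.cong[OF refl], rule sum.swap)
  also have "\<dots> = (\<Sum>i\<in>UNIV. \<Sum>j\<in>UNIV. X i j * (\<Sum>a\<in>UNIV. PP n i a * PP n j a))"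
    by (simp add: sum_distrib_left)
  also have "\<dots> = (\<Sum>i\<in>UNIV. \<Sum>j\<in>UNIV. PP n i j * X i j)"
    by (simp add: PP' mult.commute)
  finally show ?thesis .
qed

lemma trace_PP:
  assumes "(\<Sum>k\<in>UNIV. n $ k * n $ k) = 1"
  shows "(\<Sum>i\<in>(UNIV::'n::finite set). \<Sum>j\<in>UNIV. PP n i j * (if i = j then 1 else 0)) = real CARD('n) - 1"
proof -
  have "(\<Sum>i\<in>(UNIV::'n set). \<Sum>j\<in>UNIV. PP n i j * (if i = j then 1 else 0)) = (\<Sum>i\<in>(UNIV::'n set). 1 - n $ i * n $ i)"
    by (simp add: PP_def if_distrib cong: if_cong)
  also have "\<dots> = real CARD('n) - 1" using assms by (simp add: sum_subtractf)
  finally show ?thesis .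
qed

lemma PP_quad_nonneg:
  assumes "(\<Sum>k\<in>UNIV. n $ k * n $ k) = 1"
  shows "(\<Sum>i\<in>UNIV. \<Sum>j\<in>UNIV. PP n i j * (a i * a j)) \<ge> 0"
proof -
  define A where "A = (\<chi> i. a i)"
  have nn: "norm n = 1" using assms by (simp add: norm_eq_1 inner_vec_def)
  have "(\<Sum>i\<in>UNIV. \<Sum>j\<in>UNIV. PP n i j * (a i * a j))
      = (\<Sum>i\<in>UNIV. \<Sum>j\<in>UNIV. (if i = j then a i * a j else 0) - (n $ i * a i) * (n $ j * a j))"
    by (intro sum.cong refl) (simp add: PP_def algebra_simps)
  also have "\<dots> = (\<Sum>i\<in>UNIV. a i * a i) - (\<Sum>i\<in>UNIV. n $ i * a i) * (\<Sum>j\<in>UNIV. n $ j * a j)"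
    by (simp add: sum_subtractf sum_product)
  also have "\<dots> = A \<bullet> A - (n \<bullet> A)^2"
    by (simp add: A_def inner_vec_def power2_eq_square)
  finally have "(\<Sum>i\<in>UNIV. \<Sum>j\<in>UNIV. PP n i j * (a i * a j)) = A \<bullet> A - (n \<bullet> A)^2" .
  moreover have "(n \<bullet> A)^2 \<le> A \<bullet> A"
  proof -
    have "\<bar>n \<bullet> A\<bar> \<le> norm A" using Cauchy_Schwarz_ineq2[of n A] nn by simp
    then have "(n \<bullet> A)^2 \<le> (norm A)^2" by (metis abs_ge_zero power2_abs power_mono)
    then show ?thesis by (simp add: power2_norm_eq_inner)
  qed
  ultimately show ?thesis by simp
qed

lemma grad_hd_vec:
  assumes "\<And>i. partial i f differentiable (at p)"
  shows "(grad f has_derivative (\<lambda>h. \<chi> i. grad (partial i f) p \<bullet> h)) (at p)"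
proof (rule hd_vec)
  fix i
  have e: "(\<lambda>y. grad f y $ i) = partial i f" by (simp add: grad_def fun_eq_iff)
  show "((\<lambda>y. grad f y $ i) has_derivative (\<lambda>h. (\<chi> i. grad (partial i f) p \<bullet> h) $ i)) (at p)"
    unfolding e using diff_grad[OF assms[of i]] by simp
qed

lemma field_hd_vec:
  fixes N :: "real^'n \<Rightarrow> real^'n"
  assumes "\<And>k. (\<lambda>y. N y $ k) differentiable (at p)"
  shows "(N has_derivative (\<lambda>h. \<chi> k. grad (\<lambda>y. N y $ k) p \<bullet> h)) (at p)"
proof (rule hd_vec)
  fix k
  show "((\<lambda>y. N y $ k) has_derivative (\<lambda>h. (\<chi> k. grad (\<lambda>y. N y $ k) p \<bullet> h) $ k)) (at p)"
    using diff_grad[OF assms[of k]] by simp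
qed

lemma grad_inner: "grad f p \<bullet> v = (\<Sum>j\<in>UNIV. partial j f p * v $ j)"
  by (simp add: grad_def inner_vec_def)

lemma sum_swap_sym:
  "(\<Sum>i\<in>UNIV. \<Sum>j\<in>UNIV. PP n i j * X j i) = (\<Sum>i\<in>UNIV. \<Sum>j\<in>UNIV. PP n i j * X i j)"
  by (subst sum.swap) (simp add: PP_sym)

theorem corollary2p6:
  fixes \<Gamma> :: "(real^'n) set" and N :: "real^'n \<Rightarrow> real^'n"
  assumes "CARD('n) \<ge> 2"
    and "compact \<Gamma>" and "\<Gamma> \<noteq> {}"
    and "smooth_hypersurface_normal \<Gamma> N"
  shows "\<not> (\<forall>x\<in>\<Gamma>. (x \<bullet> N x) / 4 = - surf_lap N (mean_curv N) x)"
proof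
  assume H: "\<forall>x\<in>\<Gamma>. (x \<bullet> N x) / 4 = - surf_lap N (mean_curv N) x"
  note card = assms(1) and cpt = assms(2) and ne = assms(3) and hs = assms(4)
  obtain U where U: "open U" "\<Gamma> \<subseteq> U" "smooth_field_on U N"
    using hs unfolding smooth_hypersurface_normal_def by blast
  have loc: "\<And>p. p \<in> \<Gamma> \<Longrightarrow> norm (N p) = 1 \<and>
        (\<exists>V \<phi>. open V \<and> p \<in> V \<and> smooth_on V \<phi> \<and>
           (\<forall>x\<in>V. grad \<phi> x \<noteq> 0) \<and>
           \<Gamma> \<inter> V = {x\<in>V. \<phi> x = 0} \<and>
           (\<forall>x\<in>\<Gamma> \<inter> V. \<exists>c. N x = c *\<^sub>R grad \<phi> x))"
    using hs unfolding smooth_hypersurface_normal_def by blast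
  define F where "F = mean_curv N"
  have Fd: "\<And>x. x \<in> U \<Longrightarrow> F differentiable (at x)" using F_smooth(1)[OF U(1) U(3)] unfolding F_def .
  have Fd1: "\<And>x j. x \<in> U \<Longrightarrow> partial j F differentiable (at x)" using F_smooth(2)[OF U(1) U(3)] unfolding F_def .
  define g where "g = (\<lambda>y::real^'n. (1/2) * (y \<bullet> y) + 2 * (F y * F y))"
  have gdiff: "g differentiable (at x)" if "x \<in> U" for x
    using g_facts(1)[OF U(1) Fd Fd1 that g_def that] .
  have gcont: "continuous_on \<Gamma> g"
    using U(2) gdiff by (intro continuous_at_imp_continuous_on ballI differentiable_imp_continuous_within) auto
  obtain p where p: "p \<in> \<Gamma>" "\<And>y. y \<in> \<Gamma> \<Longrightarrow> g y \<le> g p"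
    using continuous_attains_sup[OF cpt ne gcont] by blast
  have pU: "p \<in> U" using p U(2) by blast
  have unit: "norm (N p) = 1" using loc[OF p(1)] by blast
  obtain V \<phi> where V: "open V" "p \<in> V" "smooth_on V \<phi>" "\<And>x. x \<in> V \<Longrightarrow> grad \<phi> x \<noteq> 0"
      "\<Gamma> \<inter> V = {x\<in>V. \<phi> x = 0}" "\<And>x. x \<in> \<Gamma> \<inter> V \<Longrightarrow> \<exists>c. N x = c *\<^sub>R grad \<phi> x"
    using loc[OF p(1)] by blast
  define W where "W = U \<inter> V"
  have W: "open W" "p \<in> W" unfolding W_def using U(1) V(1) pU V(2) by auto
  have gd: "(g has_derivative (\<lambda>h. grad g x \<bullet> h)) (at x)" if "x \<in> W" for x
    using diff_grad[OF gdiff] that unfolding W_def by blast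
  have Gd: "(grad g has_derivative (\<lambda>h. \<chi> i. grad (partial i g) p \<bullet> h)) (at p)"
    by (rule grad_hd_vec) (rule g_facts(3)[OF U(1) Fd Fd1 pU g_def])
  have \<phi>d: "(\<phi> has_derivative (\<lambda>h. grad \<phi> x \<bullet> h)) (at x)" if "x \<in> W" for x
    using diff_grad[OF sm0[OF V(3)]] that unfolding W_def by blast
  have \<Phi>dx: "(grad \<phi> has_derivative (\<lambda>h. \<chi> i. grad (partial i \<phi>) x \<bullet> h)) (at x)" if "x \<in> V" for x
    by (rule grad_hd_vec) (rule sm1[OF V(3) that])
  have \<Phi>c: "continuous_on W (grad \<phi>)"
    by (rule continuous_at_imp_continuous_on, rule ballI, rule has_derivative_continuous[OF \<Phi>dx])
       (auto simp: W_def)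
  have Nd: "(N has_derivative (\<lambda>h. \<chi> k. grad (\<lambda>y. N y $ k) p \<bullet> h)) (at p)"
    by (rule field_hd_vec) (rule sm0[OF sfo[OF U(3)] pU])
  have pG: "p \<in> \<Gamma> \<inter> V" using p(1) V(2) by blast
  have \<phi>p: "\<phi> p = 0" using pG V(5) by blast
  have inG: "q \<in> \<Gamma> \<inter> V" if "q \<in> W" "\<phi> q = 0" for q
    using that V(5) unfolding W_def by blast
  have mx: "g q \<le> g p" if "q \<in> W" "\<phi> q = 0" for q
    using p(2) inG[OF that] by blast
  have nrm: "\<exists>c. N q = c *\<^sub>R grad \<phi> q" if "q \<in> W" "\<phi> q = 0" for q
    using V(6) inG[OF that] by blast
  have MSO2: "v \<bullet> (\<chi> i. grad (partial i g) p \<bullet> v) - (N p \<bullet> grad g p) * (v \<bullet> (\<chi> k. grad (\<lambda>y. N y $ k) p \<bullet> v)) \<le> 0"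
    if "v \<bullet> N p = 0" for v
    using W gd Gd \<phi>d \<Phi>dx[OF V(2)] \<Phi>c Nd \<phi>p V(4)[OF V(2)] mx nrm unit that
    by (rule max_second_order(2))
  define n where "n = N p"
  have nn: "(\<Sum>k\<in>UNIV. n $ k * n $ k) = 1" using norm1_sum[OF unit] unfolding n_def .
  define \<mu> where "\<mu> = N p \<bullet> grad g p"
  define va where "va a = (\<chi> i. PP n i a)" for a
  have vaN: "va a \<bullet> N p = 0" for a
    using PP_n[OF nn, of a] unfolding va_def n_def by (simp add: inner_vec_def PP_sym[of "N p" _ a])
  have ineq: "va a \<bullet> (\<chi> i. grad (partial i g) p \<bullet> va a) - \<mu> * (va a \<bullet> (\<chi> k. grad (\<lambda>y. N y $ k) p \<bullet> va a)) \<le> 0" for a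
    using MSO2[OF vaN[of a]] unfolding \<mu>_def by simp
  have sum_le: "(\<Sum>a\<in>UNIV. va a \<bullet> (\<chi> i. grad (partial i g) p \<bullet> va a) - \<mu> * (va a \<bullet> (\<chi> k. grad (\<lambda>y. N y $ k) p \<bullet> va a))) \<le> 0"
    by (rule sum_nonpos) (use ineq in blast)
  have s1: "(\<Sum>a\<in>UNIV. va a \<bullet> (\<chi> i. grad (partial i g) p \<bullet> va a)) = (\<Sum>i\<in>UNIV. \<Sum>j\<in>UNIV. PP n i j * partial j (partial i g) p)"
    unfolding va_def inner_vec_def grad_inner using quad_sum[OF nn, of "\<lambda>i j. partial j (partial i g) p"]
    by (simp add: mult.commute grad_def)
  have s2: "(\<Sum>a\<in>UNIV. va a \<bullet> (\<chi> k. grad (\<lambda>y. N y $ k) p \<bullet> va a)) = - F p"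
  proof -
    have "(\<Sum>a\<in>UNIV. va a \<bullet> (\<chi> k. grad (\<lambda>y. N y $ k) p \<bullet> va a)) = (\<Sum>k\<in>UNIV. \<Sum>i\<in>UNIV. PP n k i * partial i (\<lambda>y. N y $ k) p)"
      unfolding va_def inner_vec_def grad_inner using quad_sum[OF nn, of "\<lambda>k i. partial i (\<lambda>y. N y $ k) p"]
      by (simp add: mult.commute grad_def)
    also have "\<dots> = (\<Sum>i\<in>UNIV. \<Sum>k\<in>UNIV. PP n i k * partial i (\<lambda>y. N y $ k) p)"
      by (subst sum.swap) (simp add: PP_sym)
    also have "\<dots> = - F p" unfolding F_def mean_curv_eq n_def by simp
    finally show ?thesis .
  qed
  define Sg where "Sg = (\<Sum>i\<in>UNIV. \<Sum>j\<in>UNIV. PP n i j * partial j (partial i g) p)"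
  have sumle: "Sg + \<mu> * F p \<le> 0"
  proof -
    have "(\<Sum>a\<in>UNIV. va a \<bullet> (\<chi> i. grad (partial i g) p \<bullet> va a) - \<mu> * (va a \<bullet> (\<chi> k. grad (\<lambda>y. N y $ k) p \<bullet> va a)))
        = Sg + \<mu> * F p"
      unfolding sum_subtractf sum_distrib_left[symmetric] s1 s2 Sg_def by simp
    then show ?thesis using sum_le by simp
  qed
  have gf4: "partial j (partial i g) p = (if i = j then 1 else 0) + 4 * (partial j F p * partial i F p + F p * partial j (partial i F) p)" for i j
    using g_facts(4)[OF U(1) Fd Fd1 pU g_def] .
  define T where "T = (\<Sum>i\<in>UNIV. \<Sum>j\<in>UNIV. PP n i j * (if i = j then 1 else 0))"
  define Qd where "Qd = (\<Sum>i\<in>UNIV. \<Sum>j\<in>UNIV. PP n i j * (partial i F p * partial j F p))"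
  define A where "A = (\<Sum>i\<in>UNIV. \<Sum>j\<in>UNIV. PP n i j * partial i (partial j F) p)"
  define B where "B = (\<Sum>j\<in>UNIV. n $ j * partial j F p)"
  have Sg: "Sg = T + 4 * Qd + 4 * F p * A"
  proof -
    have "Sg = (\<Sum>i\<in>UNIV. \<Sum>j\<in>UNIV. PP n i j * (if i = j then 1 else 0) + 4 * (PP n i j * (partial i F p * partial j F p))
        + 4 * F p * (PP n i j * partial j (partial i F) p))"
      unfolding Sg_def by (intro sum.cong refl) (simp add: gf4 algebra_simps)
    also have "\<dots> = T + 4 * Qd + 4 * F p * (\<Sum>i\<in>UNIV. \<Sum>j\<in>UNIV. PP n i j * partial j (partial i F) p)"
      unfolding T_def Qd_def by (simp add: sum.distrib sum_distrib_left)
    also have "(\<Sum>i\<in>UNIV. \<Sum>j\<in>UNIV. PP n i j * partial j (partial i F) p) = A"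
      unfolding A_def by (rule sum_swap_sym)
    finally show ?thesis .
  qed
  have mu: "\<mu> = p \<bullet> N p + 4 * F p * B"
  proof -
    have "\<mu> = (\<Sum>i\<in>UNIV. n $ i * (p $ i + 4 * F p * partial i F p))"
      unfolding \<mu>_def n_def inner_vec_def grad_def using g_facts(2)[OF U(1) Fd Fd1 pU g_def pU] by simp
    also have "\<dots> = p \<bullet> N p + 4 * F p * B"
      unfolding B_def n_def inner_vec_def by (simp add: algebra_simps sum.distrib sum_distrib_left)
    finally show ?thesis .
  qed
  have sl: "surf_lap N F p = A + F p * B"
    using surf_lap_formula[OF sm0[OF sfo[OF U(3)] pU] Fd1[OF pU] unit]
    unfolding A_def B_def n_def F_def by simp
  have Hp: "(p \<bullet> N p) / 4 = - surf_lap N F p" using H p(1) unfolding F_def by blast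
  have T1: "T = real CARD('n) - 1" unfolding T_def by (rule trace_PP[OF nn])
  have Q0: "Qd \<ge> 0" unfolding Qd_def by (rule PP_quad_nonneg[OF nn])
  have "Sg + \<mu> * F p = T + 4 * Qd + F p * (4 * A + p \<bullet> N p + 4 * F p * B)"
    unfolding Sg mu by (simp add: algebra_simps)
  also have "4 * A + p \<bullet> N p + 4 * F p * B = 0" using Hp sl by simp
  finally have "Sg + \<mu> * F p = T + 4 * Qd" by simp
  moreover have "T \<ge> 1" using T1 card by simp
  ultimately show False using sumle Q0 by simp
qed

end
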